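(* Let $\Sigma$ be a finite relational signature and let $\mathcal{C}$ and $\mathcal{K}$ be non-empty classes of finite $\Sigma$-structures. (a) $\mathcal{C}\cup\mathcal{K}$ is MSO-orderable if, and only if, both $\mathcal{C}$ and $\mathcal{K}$ are MSO-orderable. (b) The class $\mathcal{C}\oplus\mathcal{K}:=\{\mathfrak{A}\oplus\mathfrak{B} : \mathfrak{A}\in\mathcal{C},\ \mathfrak{B}\in\mathcal{K}\}$ is MSO-orderable if, and only if, both $\mathcal{C}$ and $\mathcal{K}$ are MSO-orderable.
   Context: Structures are finite, purely relational (universe may be empty). $\mathfrak{A}\oplus\mathfrak{B}$ denotes the disjoint union of $\mathfrak{A}$ and $\mathfrak{B}$. An MSO-formula $\varphi(x,y;Z_0,\dots,Z_{n-1})$ (two free first-order variables, $n$ free set variables called parameters) defines an order on a class $\mathcal{C}$ of structures if for every non-empty $\mathfrak{A}\in\mathcal{C}$ there are sets $P_0,\dots,P_{n-1}\subseteq A$ such that $\{(a,b) : \mathfrak{A}\models\varphi(a,b;\bar P)\}$ is a linear order on $A$. A class is MSO-orderable if some MSO-formula defines an order on it. *)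

theory Defs
  imports Main
begin

record ('a, 'r) struc =
  univ :: "'a set"
  rels :: "'r \<Rightarrow> 'a list set"

text \<open>Well-formed finite structure for the signature with arity function ar.
The universe may be empty.\<close>
definition is_struct :: "('r \<Rightarrow> nat) \<Rightarrow> ('a, 'r) struc \<Rightarrow> bool" where
  "is_struct ar S \<longleftrightarrow> finite (univ S) \<and>
     (\<forall>R. \<forall>t \<in> rels S R. length t = ar R \<and> set t \<subseteq> univ S)"

definition dunion :: "('a, 'r) struc \<Rightarrow> ('b, 'r) struc \<Rightarrow> ('a + 'b, 'r) struc" where
  "dunion A B = \<lparr> univ = Inl ` univ A \<union> Inr ` univ B,
                 rels = (\<lambda>R. map Inl ` rels A R \<union> map Inr ` rels B R) \<rparr>"

definition dunion_class ::
  "('a, 'r) struc set \<Rightarrow> ('b, 'r) struc set \<Rightarrow> ('a + 'b, 'r) struc set" where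
  "dunion_class C K = {dunion A B | A B. A \<in> C \<and> B \<in> K}"

datatype 'r mso =
    Rel 'r "nat list"
  | Eq nat nat
  | Mem nat nat
  | Neg "'r mso"
  | Conj "'r mso" "'r mso"
  | Disj "'r mso" "'r mso"
  | Ex1 nat "'r mso"
  | All1 nat "'r mso"
  | ExS nat "'r mso"
  | AllS nat "'r mso"

fun sat :: "('a, 'r) struc \<Rightarrow> 'r mso \<Rightarrow> (nat \<Rightarrow> 'a) \<Rightarrow> (nat \<Rightarrow> 'a set) \<Rightarrow> bool" where
  "sat S (Rel R xs) v V \<longleftrightarrow> map v xs \<in> rels S R"
| "sat S (Eq x y) v V \<longleftrightarrow> v x = v y"
| "sat S (Mem x X) v V \<longleftrightarrow> v x \<in> V X"
| "sat S (Neg \<phi>) v V \<longleftrightarrow> \<not> sat S \<phi> v V"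
| "sat S (Conj \<phi> \<psi>) v V \<longleftrightarrow> sat S \<phi> v V \<and> sat S \<psi> v V"
| "sat S (Disj \<phi> \<psi>) v V \<longleftrightarrow> sat S \<phi> v V \<or> sat S \<psi> v V"
| "sat S (Ex1 x \<phi>) v V \<longleftrightarrow> (\<exists>a \<in> univ S. sat S \<phi> (v(x := a)) V)"
| "sat S (All1 x \<phi>) v V \<longleftrightarrow> (\<forall>a \<in> univ S. sat S \<phi> (v(x := a)) V)"
| "sat S (ExS X \<phi>) v V \<longleftrightarrow> (\<exists>P \<subseteq> univ S. sat S \<phi> v (V(X := P)))"
| "sat S (AllS X \<phi>) v V \<longleftrightarrow> (\<forall>P \<subseteq> univ S. sat S \<phi> v (V(X := P)))"

fun fv1 :: "'r mso \<Rightarrow> nat set" where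
  "fv1 (Rel R xs) = set xs"
| "fv1 (Eq x y) = {x, y}"
| "fv1 (Mem x X) = {x}"
| "fv1 (Neg \<phi>) = fv1 \<phi>"
| "fv1 (Conj \<phi> \<psi>) = fv1 \<phi> \<union> fv1 \<psi>"
| "fv1 (Disj \<phi> \<psi>) = fv1 \<phi> \<union> fv1 \<psi>"
| "fv1 (Ex1 x \<phi>) = fv1 \<phi> - {x}"
| "fv1 (All1 x \<phi>) = fv1 \<phi> - {x}"
| "fv1 (ExS X \<phi>) = fv1 \<phi>"
| "fv1 (AllS X \<phi>) = fv1 \<phi>"

fun fvS :: "'r mso \<Rightarrow> nat set" where
  "fvS (Rel R xs) = {}"
| "fvS (Eq x y) = {}"
| "fvS (Mem x X) = {X}"
| "fvS (Neg \<phi>) = fvS \<phi>"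
| "fvS (Conj \<phi> \<psi>) = fvS \<phi> \<union> fvS \<psi>"
| "fvS (Disj \<phi> \<psi>) = fvS \<phi> \<union> fvS \<psi>"
| "fvS (Ex1 x \<phi>) = fvS \<phi>"
| "fvS (All1 x \<phi>) = fvS \<phi>"
| "fvS (ExS X \<phi>) = fvS \<phi> - {X}"
| "fvS (AllS X \<phi>) = fvS \<phi> - {X}"

text \<open>The formula phi(x,y; Z_0,...,Z_{n-1}) has first-order free variables among
x = 0, y = 1 and set parameters among 0..<n.\<close>
definition defines_order :: "'r mso \<Rightarrow> nat \<Rightarrow> ('a, 'r) struc set \<Rightarrow> bool" where
  "defines_order \<phi> n C \<longleftrightarrow>
     fv1 \<phi> \<subseteq> {0, 1} \<and> fvS \<phi> \<subseteq> {..<n} \<and>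
     (\<forall>S \<in> C. univ S \<noteq> {} \<longrightarrow>
        (\<exists>P :: nat \<Rightarrow> 'a set. (\<forall>i < n. P i \<subseteq> univ S) \<and>
           linear_order_on (univ S)
             {(a, b). a \<in> univ S \<and> b \<in> univ S \<and>
                      sat S \<phi> (\<lambda>i. if i = 0 then a else b) P}))"

definition MSO_orderable :: "('a, 'r) struc set \<Rightarrow> bool" where
  "MSO_orderable C \<longleftrightarrow> (\<exists>\<phi> n. defines_order \<phi> n C)"

end

theory Submission
  imports Defs "HOL-Library.FuncSet"
begin



lemma sat_coincide:
  "(\<forall>x\<in>fv1 \<phi>. v x = v' x) \<Longrightarrow> (\<forall>X\<in>fvS \<phi>. V X = V' X) \<Longrightarrow> sat S \<phi> v V = sat S \<phi> v' V'"
proof (induction \<phi> arbitrary: v v' V V')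
  case (Rel R xs) then show ?case by (simp add: map_eq_conv[THEN iffD2]) (metis (mono_tags, lifting) map_eq_conv)
next
  case (Ex1 x \<phi>)
  have "\<And>a. sat S \<phi> (v(x:=a)) V = sat S \<phi> (v'(x:=a)) V'" using Ex1 by (intro Ex1.IH) auto
  then show ?case by simp
next
  case (All1 x \<phi>)
  have "\<And>a. sat S \<phi> (v(x:=a)) V = sat S \<phi> (v'(x:=a)) V'" using All1 by (intro All1.IH) auto
  then show ?case by simp
next
  case (ExS X \<phi>)
  have "\<And>P. sat S \<phi> v (V(X:=P)) = sat S \<phi> v' (V'(X:=P))" using ExS by (intro ExS.IH) auto
  then show ?case by simp
next
  case (AllS X \<phi>)
  have "\<And>P. sat S \<phi> v (V(X:=P)) = sat S \<phi> v' (V'(X:=P))" using AllS by (intro AllS.IH) auto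
  then show ?case by simp
next
  case (Neg a) then show ?case by simp
next
  case (Conj a b)
  have "sat S a v V = sat S a v' V'" by (rule Conj.IH(1)) (use Conj.prems in auto)
  moreover have "sat S b v V = sat S b v' V'" by (rule Conj.IH(2)) (use Conj.prems in auto)
  ultimately show ?case by simp
next
  case (Disj a b)
  have "sat S a v V = sat S a v' V'" by (rule Disj.IH(1)) (use Disj.prems in auto)
  moreover have "sat S b v V = sat S b v' V'" by (rule Disj.IH(2)) (use Disj.prems in auto)
  ultimately show ?case by simp
qed auto

lemma defines_order_mono: "defines_order \<phi> n C \<Longrightarrow> C' \<subseteq> C \<Longrightarrow> defines_order \<phi> n C'"
  unfolding defines_order_def by blast

lemma union_orderable:
  assumes "defines_order \<phi>1 n1 C" "defines_order \<phi>2 n2 K"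
  shows "MSO_orderable (C \<union> K)"
proof -
  define m where "m = max n1 n2"
  define \<psi> where "\<psi> = Disj (Conj (Ex1 2 (Mem 2 m)) \<phi>1) (Conj (Neg (Ex1 2 (Mem 2 m))) \<phi>2)"
  have f1: "fv1 \<phi>1 \<subseteq> {0,1}" "fvS \<phi>1 \<subseteq> {..<n1}" and f2: "fv1 \<phi>2 \<subseteq> {0,1}" "fvS \<phi>2 \<subseteq> {..<n2}"
    using assms unfolding defines_order_def by auto
  have "defines_order \<psi> (Suc m) (C \<union> K)"
    unfolding defines_order_def
  proof (intro conjI ballI impI)
    show "fv1 \<psi> \<subseteq> {0,1}" using f1 f2 by (auto simp: \<psi>_def)
    show "fvS \<psi> \<subseteq> {..<Suc m}" using f1 f2 by (auto simp: \<psi>_def m_def)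
    fix S assume S: "S \<in> C \<union> K" "univ S \<noteq> {}"
    show "\<exists>P. (\<forall>i<Suc m. P i \<subseteq> univ S) \<and> linear_order_on (univ S)
             {(a, b). a \<in> univ S \<and> b \<in> univ S \<and> sat S \<psi> (\<lambda>i. if i = 0 then a else b) P}"
    proof (cases "S \<in> C")
      case True
      then obtain P1 where P1: "\<forall>i<n1. P1 i \<subseteq> univ S" "linear_order_on (univ S)
             {(a, b). a \<in> univ S \<and> b \<in> univ S \<and> sat S \<phi>1 (\<lambda>i. if i = 0 then a else b) P1}"
        using assms(1) S unfolding defines_order_def by blast
      define P where "P = (\<lambda>i. if i < n1 then P1 i else if i = m then univ S else {})"
      have eq: "sat S \<psi> v P = sat S \<phi>1 v P1" for v
      proof -
        have "sat S \<phi>1 v P = sat S \<phi>1 v P1"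
          by (rule sat_coincide) (use f1 in \<open>auto simp: P_def\<close>)
        moreover have "sat S (Ex1 2 (Mem 2 m)) v P" using S(2) by (auto simp: P_def m_def)
        ultimately show ?thesis by (simp add: \<psi>_def)
      qed
      have "\<forall>i<Suc m. P i \<subseteq> univ S" using P1 by (auto simp: P_def)
      then show ?thesis using P1(2) by (intro exI[of _ P]) (simp add: eq)
    next
      case False
      then have "S \<in> K" using S by auto
      then obtain P2 where P2: "\<forall>i<n2. P2 i \<subseteq> univ S" "linear_order_on (univ S)
             {(a, b). a \<in> univ S \<and> b \<in> univ S \<and> sat S \<phi>2 (\<lambda>i. if i = 0 then a else b) P2}"
        using assms(2) S unfolding defines_order_def by blast
      define P where "P = (\<lambda>i. if i < n2 then P2 i else {})"
      have eq: "sat S \<psi> v P = sat S \<phi>2 v P2" for v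
      proof -
        have "sat S \<phi>2 v P = sat S \<phi>2 v P2"
          by (rule sat_coincide) (use f2 in \<open>auto simp: P_def\<close>)
        moreover have "\<not> sat S (Ex1 2 (Mem 2 m)) v P" by (auto simp: P_def m_def)
        ultimately show ?thesis by (simp add: \<psi>_def)
      qed
      have "\<forall>i<Suc m. P i \<subseteq> univ S" using P2 by (auto simp: P_def)
      then show ?thesis using P2(2) by (intro exI[of _ P]) (simp add: eq)
    qed
  qed
  then show ?thesis unfolding MSO_orderable_def by blast
qed




definition TT :: "'r mso" where "TT = All1 0 (Eq 0 0)"
definition FF :: "'r mso" where "FF = Neg TT"
definition cnst :: "bool \<Rightarrow> 'r mso" where "cnst b = (if b then TT else FF)"

lemma sat_TT[simp]: "sat S TT v V" and sat_FF[simp]: "\<not> sat S FF v V"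
  and sat_cnst[simp]: "sat S (cnst b) v V = b"
  by (auto simp: TT_def FF_def cnst_def)
lemma fv_TT[simp]: "fv1 TT = {}" "fvS TT = {}" "fv1 FF = {}" "fvS FF = {}" "fv1 (cnst b) = {}" "fvS (cnst b) = {}"
  by (auto simp: TT_def FF_def cnst_def)

primrec bigdisj :: "'r mso list \<Rightarrow> 'r mso" where
  "bigdisj [] = FF" | "bigdisj (p # ps) = Disj p (bigdisj ps)"
primrec bigconj :: "'r mso list \<Rightarrow> 'r mso" where
  "bigconj [] = TT" | "bigconj (p # ps) = Conj p (bigconj ps)"

lemma sat_bigdisj[simp]: "sat S (bigdisj ps) v V = (\<exists>p\<in>set ps. sat S p v V)"
  by (induction ps) auto
lemma sat_bigconj[simp]: "sat S (bigconj ps) v V = (\<forall>p\<in>set ps. sat S p v V)"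
  by (induction ps) auto
lemma fv_big[simp]: "fv1 (bigdisj ps) = \<Union>(fv1 ` set ps)" "fvS (bigdisj ps) = \<Union>(fvS ` set ps)"
  "fv1 (bigconj ps) = \<Union>(fv1 ` set ps)" "fvS (bigconj ps) = \<Union>(fvS ` set ps)"
  by (induction ps) auto

primrec tr :: "('b,'r) struc \<Rightarrow> 'b list \<Rightarrow> 'b set list \<Rightarrow> (nat \<Rightarrow> 'b option) \<Rightarrow> (nat \<Rightarrow> 'b set) \<Rightarrow> 'r mso \<Rightarrow> 'r mso" where
  "tr B bl Ql fo so (Rel R xs) =
     (if (\<forall>x\<in>set xs. fo x = None) then (if xs = [] \<and> [] \<in> rels B R then TT else Rel R xs)
      else if (\<forall>x\<in>set xs. fo x \<noteq> None) then cnst (map (the \<circ> fo) xs \<in> rels B R) else FF)"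
| "tr B bl Ql fo so (Eq x y) = (case fo x of None \<Rightarrow> (case fo y of None \<Rightarrow> Eq x y | Some _ \<Rightarrow> FF)
      | Some a \<Rightarrow> (case fo y of None \<Rightarrow> FF | Some b \<Rightarrow> cnst (a = b)))"
| "tr B bl Ql fo so (Mem x X) = (case fo x of None \<Rightarrow> Mem x X | Some b \<Rightarrow> cnst (b \<in> so X))"
| "tr B bl Ql fo so (Neg \<phi>) = Neg (tr B bl Ql fo so \<phi>)"
| "tr B bl Ql fo so (Conj \<phi> \<psi>) = Conj (tr B bl Ql fo so \<phi>) (tr B bl Ql fo so \<psi>)"
| "tr B bl Ql fo so (Disj \<phi> \<psi>) = Disj (tr B bl Ql fo so \<phi>) (tr B bl Ql fo so \<psi>)"
| "tr B bl Ql fo so (Ex1 x \<phi>) = Disj (Ex1 x (tr B bl Ql (fo(x:=None)) so \<phi>))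
      (bigdisj (map (\<lambda>b. tr B bl Ql (fo(x:=Some b)) so \<phi>) bl))"
| "tr B bl Ql fo so (All1 x \<phi>) = Conj (All1 x (tr B bl Ql (fo(x:=None)) so \<phi>))
      (bigconj (map (\<lambda>b. tr B bl Ql (fo(x:=Some b)) so \<phi>) bl))"
| "tr B bl Ql fo so (ExS X \<phi>) = bigdisj (map (\<lambda>Q. ExS X (tr B bl Ql fo (so(X:=Q)) \<phi>)) Ql)"
| "tr B bl Ql fo so (AllS X \<phi>) = bigconj (map (\<lambda>Q. AllS X (tr B bl Ql fo (so(X:=Q)) \<phi>)) Ql)"

lemma fv1_tr: "x \<in> fv1 (tr B bl Ql fo so \<phi>) \<Longrightarrow> x \<in> fv1 \<phi> \<and> fo x = None"
  apply (induction \<phi> arbitrary: fo so)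
  apply (auto split: option.splits if_splits)
  apply (fastforce split: if_splits)+
  done

lemma fvS_tr: "X \<in> fvS (tr B bl Ql fo so \<phi>) \<Longrightarrow> X \<in> fvS \<phi>"
  apply (induction \<phi> arbitrary: fo so)
  apply (auto split: option.splits if_splits)
  done

lemma bex_img: "(\<exists>x\<in>f ` A. P x) = (\<exists>x\<in>A. P (f x))" by blast
lemma ball_img: "(\<forall>x\<in>f ` A. P x) = (\<forall>x\<in>A. P (f x))" by blast

lemma dec_sub: "P \<subseteq> e1 ` A \<union> e2 ` B \<Longrightarrow> P = e1 ` (e1 -` P \<inter> A) \<union> e2 ` (e2 -` P \<inter> B)"
  by blast

definition mkv :: "('b \<Rightarrow> 'c) \<Rightarrow> ('d \<Rightarrow> 'c) \<Rightarrow> (nat \<Rightarrow> 'd option) \<Rightarrow> (nat \<Rightarrow> 'b) \<Rightarrow> nat \<Rightarrow> 'c" where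
  "mkv e1 e2 fo v' x = (case fo x of None \<Rightarrow> e1 (v' x) | Some b \<Rightarrow> e2 b)"
definition mkV :: "('b \<Rightarrow> 'c) \<Rightarrow> ('d \<Rightarrow> 'c) \<Rightarrow> (nat \<Rightarrow> 'd set) \<Rightarrow> (nat \<Rightarrow> 'b set) \<Rightarrow> nat \<Rightarrow> 'c set" where
  "mkV e1 e2 so V' X = e1 ` V' X \<union> e2 ` so X"

lemma tr_sat:
  fixes S :: "('c,'r) struc" and A :: "('b,'r) struc" and B :: "('d,'r) struc"
  assumes i1: "inj e1" and i2: "inj e2" and dj: "\<And>a b. e1 a \<noteq> e2 b"
    and U: "univ S = e1 ` univ A \<union> e2 ` univ B"
    and R: "\<And>R. rels S R = map e1 ` rels A R \<union> map e2 ` rels B R"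
    and bl: "set bl = univ B" and Ql: "set Ql = Pow (univ B)"
  shows "sat S \<phi> (mkv e1 e2 fo v') (mkV e1 e2 so V') = sat A (tr B bl Ql fo so \<phi>) v' V'"
proof (induction \<phi> arbitrary: fo so v' V')
  case (Rel r xs)
  have inj1: "inj (map e1)" and inj2: "inj (map e2)" using i1 i2 by (auto simp: inj_mapI)
  have ne12: "map e1 ys \<noteq> map e2 zs" if "ys \<noteq> [] \<or> zs \<noteq> []" for ys zs
  proof
    assume "map e1 ys = map e2 zs"
    moreover have "ys \<noteq> []" "zs \<noteq> []" using that calculation by auto
    ultimately show False using dj by (cases ys; cases zs) auto
  qed
  show ?case
  proof (cases "\<forall>x\<in>set xs. fo x = None")
    case True
    then have m: "map (mkv e1 e2 fo v') xs = map e1 (map v' xs)" by (auto simp: mkv_def)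
    show ?thesis
    proof (cases "xs = []")
      case True then show ?thesis by (auto simp: R)
    next
      case False
      have a: "map e1 (map v' xs) \<notin> map e2 ` rels B r" using ne12[of "map v' xs"] False by (auto simp del: map_map)
      have b: "map e1 (map v' xs) \<in> map e1 ` rels A r \<longleftrightarrow> map v' xs \<in> rels A r"
        by (rule inj_image_mem_iff[OF inj1])
      show ?thesis using \<open>\<forall>x\<in>set xs. fo x = None\<close> False a b
        by (simp add: R m del: map_map)
    qed
  next
    case F1: False
    show ?thesis
    proof (cases "\<forall>x\<in>set xs. fo x \<noteq> None")
      case True
      then have m: "map (mkv e1 e2 fo v') xs = map e2 (map (the \<circ> fo) xs)" by (auto simp: mkv_def)
      have "xs \<noteq> []" using F1 by auto
      have a: "map e2 (map (the \<circ> fo) xs) \<notin> map e1 ` rels A r"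
      proof
        assume "map e2 (map (the \<circ> fo) xs) \<in> map e1 ` rels A r"
        then obtain ys where "map e2 (map (the \<circ> fo) xs) = map e1 ys" by blast
        then show False using ne12[of ys "map (the \<circ> fo) xs"] \<open>xs \<noteq> []\<close> by simp
      qed
      have b: "map e2 (map (the \<circ> fo) xs) \<in> map e2 ` rels B r \<longleftrightarrow> map (the \<circ> fo) xs \<in> rels B r"
        by (rule inj_image_mem_iff[OF inj2])
      have t: "tr B bl Ql fo so (Rel r xs) = cnst (map (the \<circ> fo) xs \<in> rels B r)"
        using F1 True by (simp only: tr.simps if_False if_True if_P if_not_P)
      show ?thesis using a b
        by (simp add: R m t del: map_map tr.simps)
    next
      case False
      then obtain x1 x2 where x: "x1 \<in> set xs" "fo x1 = None" "x2 \<in> set xs" "fo x2 \<noteq> None" using F1 by auto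
      have "map (mkv e1 e2 fo v') xs \<notin> map e1 ` rels A r"
      proof
        assume "map (mkv e1 e2 fo v') xs \<in> map e1 ` rels A r"
        then obtain ys where "map (mkv e1 e2 fo v') xs = map e1 ys" by auto
        then have "mkv e1 e2 fo v' x2 \<in> set (map e1 ys)" using x by (metis image_eqI set_map)
        then show False using x dj by (auto simp: mkv_def) (metis dj)
      qed
      moreover have "map (mkv e1 e2 fo v') xs \<notin> map e2 ` rels B r"
      proof
        assume "map (mkv e1 e2 fo v') xs \<in> map e2 ` rels B r"
        then obtain ys where "map (mkv e1 e2 fo v') xs = map e2 ys" by auto
        then have "mkv e1 e2 fo v' x1 \<in> set (map e2 ys)" using x by (metis image_eqI set_map)
        then show False using x dj by (auto simp: mkv_def)
      qed
      moreover have t: "tr B bl Ql fo so (Rel r xs) = FF"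
        using F1 False by (simp only: tr.simps if_False if_True if_P if_not_P)
      ultimately show ?thesis by (simp add: R t del: tr.simps)
    qed
  qed
next
  case (Eq x y) 
  have dj': "e2 b \<noteq> e1 a" for a b using dj by metis
  show ?case
    using i1 i2 dj dj' by (auto simp: mkv_def inj_eq split: option.splits)
next
  case (Mem x X)
  have dj': "e2 b \<noteq> e1 a" for a b using dj by metis
  show ?case
    using i1 i2 dj dj' by (auto simp: mkv_def mkV_def inj_image_mem_iff split: option.splits)
next
  case (Ex1 x \<phi>)
  have a: "(mkv e1 e2 fo v')(x := e1 a) = mkv e1 e2 (fo(x:=None)) (v'(x:=a))" for a
    by (rule ext) (auto simp: mkv_def split: option.splits)
  have b: "(mkv e1 e2 fo v')(x := e2 b) = mkv e1 e2 (fo(x:=Some b)) v'" for b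
    by (rule ext) (auto simp: mkv_def split: option.splits)
  have "sat S (Ex1 x \<phi>) (mkv e1 e2 fo v') (mkV e1 e2 so V') \<longleftrightarrow>
    (\<exists>a\<in>univ A. sat S \<phi> ((mkv e1 e2 fo v')(x := e1 a)) (mkV e1 e2 so V')) \<or>
    (\<exists>b\<in>univ B. sat S \<phi> ((mkv e1 e2 fo v')(x := e2 b)) (mkV e1 e2 so V'))"
    by (simp only: sat.simps U bex_Un bex_img)
  also have "\<dots> \<longleftrightarrow> sat A (tr B bl Ql fo so (Ex1 x \<phi>)) v' V'"
    by (simp only: a b Ex1.IH tr.simps sat.simps sat_bigdisj set_map bex_img bl)
  finally show ?case .
next
  case (All1 x \<phi>)
  have a: "(mkv e1 e2 fo v')(x := e1 a) = mkv e1 e2 (fo(x:=None)) (v'(x:=a))" for a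
    by (rule ext) (auto simp: mkv_def split: option.splits)
  have b: "(mkv e1 e2 fo v')(x := e2 b) = mkv e1 e2 (fo(x:=Some b)) v'" for b
    by (rule ext) (auto simp: mkv_def split: option.splits)
  have "sat S (All1 x \<phi>) (mkv e1 e2 fo v') (mkV e1 e2 so V') \<longleftrightarrow>
    (\<forall>a\<in>univ A. sat S \<phi> ((mkv e1 e2 fo v')(x := e1 a)) (mkV e1 e2 so V')) \<and>
    (\<forall>b\<in>univ B. sat S \<phi> ((mkv e1 e2 fo v')(x := e2 b)) (mkV e1 e2 so V'))"
    by (simp only: sat.simps U ball_Un ball_img)
  also have "\<dots> \<longleftrightarrow> sat A (tr B bl Ql fo so (All1 x \<phi>)) v' V'"
    by (simp only: a b All1.IH tr.simps sat.simps sat_bigconj set_map ball_img bl)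
  finally show ?case .
next
  case (ExS X \<phi>)
  have u: "(mkV e1 e2 so V')(X := e1 ` P \<union> e2 ` Q) = mkV e1 e2 (so(X:=Q)) (V'(X:=P))" for P Q
    by (rule ext) (auto simp: mkV_def)
  have dec: "P \<subseteq> univ S \<Longrightarrow> \<exists>P1 Q. P1 \<subseteq> univ A \<and> Q \<subseteq> univ B \<and> P = e1 ` P1 \<union> e2 ` Q" for P
  proof -
    assume "P \<subseteq> univ S"
    then have "P = e1 ` (e1 -` P \<inter> univ A) \<union> e2 ` (e2 -` P \<inter> univ B)"
      using dec_sub[of P e1 "univ A" e2 "univ B"] U by simp
    then show ?thesis by blast
  qed
  show ?case
  proof
    assume "sat S (ExS X \<phi>) (mkv e1 e2 fo v') (mkV e1 e2 so V')"
    then obtain P where P: "P \<subseteq> univ S" "sat S \<phi> (mkv e1 e2 fo v') ((mkV e1 e2 so V')(X := P))" by auto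
    from dec[OF P(1)] obtain P1 Q where PQ: "P1 \<subseteq> univ A" "Q \<subseteq> univ B" "P = e1 ` P1 \<union> e2 ` Q" by blast
    from P(2) have "sat A (tr B bl Ql fo (so(X:=Q)) \<phi>) v' (V'(X:=P1))"
      unfolding PQ(3) by (simp only: u ExS.IH)
    then show "sat A (tr B bl Ql fo so (ExS X \<phi>)) v' V'"
      using PQ(1,2) by (simp only: tr.simps sat_bigdisj set_map bex_img Ql sat.simps) blast
  next
    assume "sat A (tr B bl Ql fo so (ExS X \<phi>)) v' V'"
    then obtain Q P1 where "Q \<subseteq> univ B" "P1 \<subseteq> univ A" "sat A (tr B bl Ql fo (so(X:=Q)) \<phi>) v' (V'(X:=P1))"
      by (auto simp: Ql)
    then have "sat S \<phi> (mkv e1 e2 fo v') ((mkV e1 e2 so V')(X := e1 ` P1 \<union> e2 ` Q))"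
      "e1 ` P1 \<union> e2 ` Q \<subseteq> univ S" using U by (simp_all only: u ExS.IH) auto
    then show "sat S (ExS X \<phi>) (mkv e1 e2 fo v') (mkV e1 e2 so V')"
      by (simp only: sat.simps) blast
  qed
next
  case (AllS X \<phi>)
  have u: "(mkV e1 e2 so V')(X := e1 ` P \<union> e2 ` Q) = mkV e1 e2 (so(X:=Q)) (V'(X:=P))" for P Q
    by (rule ext) (auto simp: mkV_def)
  have dec: "P \<subseteq> univ S \<Longrightarrow> \<exists>P1 Q. P1 \<subseteq> univ A \<and> Q \<subseteq> univ B \<and> P = e1 ` P1 \<union> e2 ` Q" for P
  proof -
    assume "P \<subseteq> univ S"
    then have "P = e1 ` (e1 -` P \<inter> univ A) \<union> e2 ` (e2 -` P \<inter> univ B)"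
      using dec_sub[of P e1 "univ A" e2 "univ B"] U by simp
    then show ?thesis by blast
  qed
  show ?case
  proof
    assume H: "sat S (AllS X \<phi>) (mkv e1 e2 fo v') (mkV e1 e2 so V')"
    have "sat A (tr B bl Ql fo (so(X := Q)) \<phi>) v' (V'(X := P1))"
      if "Q \<subseteq> univ B" "P1 \<subseteq> univ A" for Q P1
    proof -
      have "e1 ` P1 \<union> e2 ` Q \<subseteq> univ S" using U that by auto
      with H have "sat S \<phi> (mkv e1 e2 fo v') ((mkV e1 e2 so V')(X := e1 ` P1 \<union> e2 ` Q))"
        by (simp only: sat.simps)
      then show ?thesis by (simp only: u AllS.IH)
    qed
    then show "sat A (tr B bl Ql fo so (AllS X \<phi>)) v' V'"
      by (simp only: tr.simps sat_bigconj set_map ball_img Ql sat.simps Pow_iff) blast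
  next
    assume H: "sat A (tr B bl Ql fo so (AllS X \<phi>)) v' V'"
    have "sat S \<phi> (mkv e1 e2 fo v') ((mkV e1 e2 so V')(X := P))" if "P \<subseteq> univ S" for P
    proof -
      from dec[OF that] obtain P1 Q where PQ: "P1 \<subseteq> univ A" "Q \<subseteq> univ B" "P = e1 ` P1 \<union> e2 ` Q" by blast
      from H PQ(1,2) have "sat A (tr B bl Ql fo (so(X:=Q)) \<phi>) v' (V'(X:=P1))"
        by (simp only: tr.simps sat_bigconj set_map ball_img Ql sat.simps Pow_iff; blast)
      then show ?thesis unfolding PQ(3) by (simp only: u AllS.IH)
    qed
    then show "sat S (AllS X \<phi>) (mkv e1 e2 fo v') (mkV e1 e2 so V')"
      by (simp only: sat.simps) blast
  qed
qed auto




lemma restrict_lin: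
  assumes lin: "linear_order_on U r" and inj: "inj f" and sub: "f ` A \<subseteq> U"
  shows "linear_order_on A {(a,b). a\<in>A \<and> b\<in>A \<and> (f a, f b) \<in> r}" (is "linear_order_on A ?r")
proof -
  have rf: "\<And>x. x \<in> U \<Longrightarrow> (x,x) \<in> r" and tr: "\<And>x y z. (x,y)\<in>r \<Longrightarrow> (y,z)\<in>r \<Longrightarrow> (x,z)\<in>r"
    and an: "\<And>x y. (x,y)\<in>r \<Longrightarrow> (y,x)\<in>r \<Longrightarrow> x = y"
    and to: "\<And>x y. x\<in>U \<Longrightarrow> y\<in>U \<Longrightarrow> x \<noteq> y \<Longrightarrow> (x,y)\<in>r \<or> (y,x)\<in>r"
    using lin unfolding linear_order_on_def partial_order_on_def preorder_on_def refl_on_def trans_def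
      antisym_def total_on_def by blast+
  have "refl_on A ?r" unfolding refl_on_def using rf sub by blast
  moreover have "trans ?r" unfolding trans_def using tr by blast
  moreover have "antisym ?r" unfolding antisym_def using an inj by (auto dest: injD)
  moreover have "total_on A ?r" unfolding total_on_def 
  proof (intro ballI impI)
    fix x y assume "x \<in> A" "y \<in> A" "x \<noteq> y"
    then have "f x \<in> U" "f y \<in> U" "f x \<noteq> f y" using sub inj by (auto simp: inj_eq)
    then show "(x, y) \<in> ?r \<or> (y, x) \<in> ?r" using to \<open>x \<in> A\<close> \<open>y \<in> A\<close> by blast
  qed
  ultimately show ?thesis
    unfolding linear_order_on_def partial_order_on_def preorder_on_def by blast
qed

lemma part_orderable:
  fixes e1 :: "'b \<Rightarrow> 'c" and e2 :: "'d \<Rightarrow> 'c" and B0 :: "('d,'r) struc"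
    and C0 :: "('b,'r) struc set" and SC :: "('c,'r) struc set"
  assumes dor: "defines_order \<psi> n SC" and i1: "inj e1" and i2: "inj e2" and dj: "\<And>a b. e1 a \<noteq> e2 b"
    and fin: "finite (univ B0)"
    and ex: "\<And>A. A \<in> C0 \<Longrightarrow> univ A \<noteq> {} \<Longrightarrow> \<exists>S\<in>SC. univ S = e1 ` univ A \<union> e2 ` univ B0 \<and>
                   (\<forall>R. rels S R = map e1 ` rels A R \<union> map e2 ` rels B0 R)"
  shows "MSO_orderable C0"
proof -
  obtain bl where bl: "set bl = univ B0" using finite_list[OF fin] by blast
  have "finite (Pow (univ B0))" using fin by simp
  from finite_list[OF this] obtain Ql where Ql: "set Ql = Pow (univ B0)" by blast
  have "finite (Pi\<^sub>E {..<n} (\<lambda>_. Pow (univ B0)))" using fin by (intro finite_PiE) auto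
  from finite_list[OF this] obtain qs where qs: "set qs = Pi\<^sub>E {..<n} (\<lambda>_. Pow (univ B0))" by blast
  have f\<psi>: "fv1 \<psi> \<subseteq> {0,1}" "fvS \<psi> \<subseteq> {..<n}" using dor unfolding defines_order_def by (meson conjunct1 conjunct2)+
  define \<Phi> where "\<Phi> = bigdisj (map (\<lambda>j. Conj (Ex1 2 (Mem 2 (n+j))) (tr B0 bl Ql (\<lambda>_. None) (qs!j) \<psi>)) [0..<length qs])"
  have "defines_order \<Phi> (n + length qs) C0"
    unfolding defines_order_def
  proof (intro conjI ballI impI)
    show "fv1 \<Phi> \<subseteq> {0,1}" using f\<psi> by (auto simp: \<Phi>_def dest!: fv1_tr)
    show "fvS \<Phi> \<subseteq> {..<n + length qs}" using f\<psi> by (auto simp: \<Phi>_def dest!: fvS_tr)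
    fix A assume A: "A \<in> C0" "univ A \<noteq> {}"
    obtain S where S: "S \<in> SC" "univ S = e1 ` univ A \<union> e2 ` univ B0"
      "\<forall>R. rels S R = map e1 ` rels A R \<union> map e2 ` rels B0 R" using ex[OF A] by (elim bexE conjE) blast
    have "univ S \<noteq> {}" unfolding S(2) using A(2) by simp
    then obtain P where P: "\<forall>i<n. P i \<subseteq> univ S" and lin: "linear_order_on (univ S)
             {(a, b). a \<in> univ S \<and> b \<in> univ S \<and> sat S \<psi> (\<lambda>i. if i = 0 then a else b) P}"
      using dor S(1) unfolding defines_order_def by blast
    define q0 where "q0 = restrict (\<lambda>X. e2 -` P X \<inter> univ B0) {..<n}"
    have "q0 \<in> set qs" unfolding qs q0_def by auto
    then obtain j0 where j0: "j0 < length qs" "qs ! j0 = q0" unfolding in_set_conv_nth by blast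
    define PA where "PA = (\<lambda>X. if X < n then e1 -` P X \<inter> univ A else if X = n + j0 then univ A else {})"
    define P' where "P' = (\<lambda>X. e1 -` P X \<inter> univ A)"
    have key: "sat A \<Phi> (\<lambda>i. if i = 0 then a else b) PA \<longleftrightarrow> sat S \<psi> (\<lambda>i. if i = 0 then e1 a else e1 b) P" for a b
    proof -
      let ?v = "\<lambda>i. if i = 0 then a else b"
      have "sat A \<Phi> ?v PA \<longleftrightarrow> sat A (tr B0 bl Ql (\<lambda>_. None) q0 \<psi>) ?v PA"
      proof -
        have "PA (n+j) = (if j = j0 then univ A else {})" for j by (auto simp: PA_def)
        then show ?thesis using A(2) j0 by (auto simp: \<Phi>_def)
      qed
      also have "\<dots> \<longleftrightarrow> sat A (tr B0 bl Ql (\<lambda>_. None) q0 \<psi>) ?v P'"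
        by (rule sat_coincide) (use f\<psi> in \<open>auto simp: PA_def P'_def dest!: fvS_tr\<close>)
      also have "\<dots> \<longleftrightarrow> sat S \<psi> (mkv e1 e2 (\<lambda>_. None) ?v) (mkV e1 e2 q0 P')"
        by (rule tr_sat[symmetric]) (use i1 i2 dj S bl Ql in auto)
      also have "\<dots> \<longleftrightarrow> sat S \<psi> (\<lambda>i. if i = 0 then e1 a else e1 b) P"
      proof (rule sat_coincide)
        show "\<forall>x\<in>fv1 \<psi>. mkv e1 e2 (\<lambda>_. None) ?v x = (if x = 0 then e1 a else e1 b)"
          by (auto simp: mkv_def)
        show "\<forall>X\<in>fvS \<psi>. mkV e1 e2 q0 P' X = P X"
        proof
          fix X assume "X \<in> fvS \<psi>"
          then have "X < n" using f\<psi> by auto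
          then have "P X \<subseteq> e1 ` univ A \<union> e2 ` univ B0" using P S(2) by auto
          then show "mkV e1 e2 q0 P' X = P X" using \<open>X < n\<close>
            by (simp add: mkV_def q0_def P'_def dec_sub[symmetric])
        qed
      qed
      finally show ?thesis .
    qed
    have eq: "{(a, b). a \<in> univ A \<and> b \<in> univ A \<and> sat A \<Phi> (\<lambda>i. if i = 0 then a else b) PA}
      = {(a,b). a\<in>univ A \<and> b\<in>univ A \<and> (e1 a, e1 b) \<in> {(a, b). a \<in> univ S \<and> b \<in> univ S \<and> sat S \<psi> (\<lambda>i. if i = 0 then a else b) P}}"
      using S(2) by (auto simp: key)
    have "linear_order_on (univ A) {(a, b). a \<in> univ A \<and> b \<in> univ A \<and> sat A \<Phi> (\<lambda>i. if i = 0 then a else b) PA}"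
      unfolding eq by (rule restrict_lin[OF lin i1]) (use S(2) in auto)
    moreover have "\<forall>i<n + length qs. PA i \<subseteq> univ A" by (auto simp: PA_def)
    ultimately show "\<exists>P. (\<forall>i<n + length qs. P i \<subseteq> univ A) \<and> linear_order_on (univ A)
             {(a, b). a \<in> univ A \<and> b \<in> univ A \<and> sat A \<Phi> (\<lambda>i. if i = 0 then a else b) P}" by blast
  qed
  then show ?thesis unfolding MSO_orderable_def by blast
qed




primrec allS :: "'r mso \<Rightarrow> nat set" where
  "allS (Rel R xs) = {}" | "allS (Eq x y) = {}" | "allS (Mem x X) = {X}"
| "allS (Neg \<phi>) = allS \<phi>" | "allS (Conj \<phi> \<psi>) = allS \<phi> \<union> allS \<psi>" | "allS (Disj \<phi> \<psi>) = allS \<phi> \<union> allS \<psi>"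
| "allS (Ex1 x \<phi>) = allS \<phi>" | "allS (All1 x \<phi>) = allS \<phi>"
| "allS (ExS X \<phi>) = insert X (allS \<phi>)" | "allS (AllS X \<phi>) = insert X (allS \<phi>)"

lemma finite_allS: "finite (allS \<phi>)" by (induction \<phi>) auto

primrec rel :: "(nat \<Rightarrow> 'r mso) \<Rightarrow> ('r \<Rightarrow> nat) \<Rightarrow> 'r mso \<Rightarrow> 'r mso" where
  "rel pm w (Rel R xs) = (if xs = [] then Ex1 0 (Mem 0 (w R)) else Rel R xs)"
| "rel pm w (Eq x y) = Eq x y"
| "rel pm w (Mem x X) = Mem x X"
| "rel pm w (Neg \<phi>) = Neg (rel pm w \<phi>)"
| "rel pm w (Conj \<phi> \<psi>) = Conj (rel pm w \<phi>) (rel pm w \<psi>)"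
| "rel pm w (Disj \<phi> \<psi>) = Disj (rel pm w \<phi>) (rel pm w \<psi>)"
| "rel pm w (Ex1 x \<phi>) = Ex1 x (Conj (pm x) (rel pm w \<phi>))"
| "rel pm w (All1 x \<phi>) = All1 x (Disj (Neg (pm x)) (rel pm w \<phi>))"
| "rel pm w (ExS X \<phi>) = ExS X (Conj (All1 0 (Disj (Neg (Mem 0 X)) (pm 0))) (rel pm w \<phi>))"
| "rel pm w (AllS X \<phi>) = AllS X (Disj (Neg (All1 0 (Disj (Neg (Mem 0 X)) (pm 0)))) (rel pm w \<phi>))"

lemma fv1_rel: "(\<And>y. fv1 (pm y) \<subseteq> {y}) \<Longrightarrow> x \<in> fv1 (rel pm w \<phi>) \<Longrightarrow> x \<in> fv1 \<phi>"
  apply (induction \<phi>)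
  apply (auto split: if_splits)
  done

lemma fvS_rel: "(\<And>y. fvS (pm y) \<subseteq> M) \<Longrightarrow> X \<in> fvS (rel pm w \<phi>) \<Longrightarrow> X \<in> fvS \<phi> \<or> X \<in> range w \<or> X \<in> M"
  apply (induction \<phi>)
  apply (auto split: if_splits)
  done

lemma rel_sat:
  fixes S :: "('c,'r) struc" and A :: "('b,'r) struc"
  assumes inj: "inj e" and Ue: "U = e ` univ A" and US: "U \<subseteq> univ S"
    and pm: "\<And>x v V. good V \<Longrightarrow> v x \<in> univ S \<Longrightarrow> sat S (pm x) v V \<longleftrightarrow> v x \<in> U"
    and gu: "\<And>V X P. good V \<Longrightarrow> X \<in> Xs \<Longrightarrow> good (V(X:=P))"
    and rl: "\<And>R ys. ys \<noteq> [] \<Longrightarrow> map e ys \<in> rels S R \<longleftrightarrow> ys \<in> rels A R"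
    and nul: "\<And>R V. good V \<Longrightarrow> (\<exists>a\<in>univ S. a \<in> V (w R)) \<longleftrightarrow> [] \<in> rels A R"
  shows "allS \<phi> \<subseteq> Xs \<Longrightarrow> good V \<Longrightarrow> (\<forall>X\<in>fvS \<phi>. V X \<inter> U = e ` V' X) \<Longrightarrow> (\<forall>x. v' x \<in> univ A) \<Longrightarrow>
         sat S (rel pm w \<phi>) (e \<circ> v') V \<longleftrightarrow> sat A \<phi> v' V'"
proof (induction \<phi> arbitrary: v' V V')
  case (Rel R xs)
  show ?case
  proof (cases "xs = []")
    case True then show ?thesis using nul[OF Rel(2)] by simp
  next
    case False then show ?thesis using rl[of "map v' xs" R] by (simp add: comp_def)
  qed
next
  case (Eq x y) then show ?case using inj by (simp add: inj_eq)
next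
  case (Mem x X)
  have "e (v' x) \<in> U" using Mem(4) Ue by auto
  then have "e (v' x) \<in> V X \<longleftrightarrow> e (v' x) \<in> e ` V' X" using Mem(3) by auto
  then show ?case using inj by (simp add: inj_image_mem_iff)
next
  case (Neg \<phi>) then show ?case by simp
next
  case (Conj \<phi>1 \<phi>2)
  have "sat S (rel pm w \<phi>1) (e \<circ> v') V \<longleftrightarrow> sat A \<phi>1 v' V'" by (rule Conj.IH(1)) (use Conj.prems in auto)
  moreover have "sat S (rel pm w \<phi>2) (e \<circ> v') V \<longleftrightarrow> sat A \<phi>2 v' V'" by (rule Conj.IH(2)) (use Conj.prems in auto)
  ultimately show ?case by (simp only: rel.simps sat.simps)
next
  case (Disj \<phi>1 \<phi>2)
  have "sat S (rel pm w \<phi>1) (e \<circ> v') V \<longleftrightarrow> sat A \<phi>1 v' V'" by (rule Disj.IH(1)) (use Disj.prems in auto)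
  moreover have "sat S (rel pm w \<phi>2) (e \<circ> v') V \<longleftrightarrow> sat A \<phi>2 v' V'" by (rule Disj.IH(2)) (use Disj.prems in auto)
  ultimately show ?case by (simp only: rel.simps sat.simps)
next
  case (Ex1 x \<phi>)
  have upd: "(e \<circ> v')(x := e a) = e \<circ> (v'(x := a))" for a by (rule ext) simp
  have "sat S (rel pm w (Ex1 x \<phi>)) (e \<circ> v') V \<longleftrightarrow>
        (\<exists>a\<in>univ S. a \<in> U \<and> sat S (rel pm w \<phi>) ((e \<circ> v')(x := a)) V)"
    using pm[OF Ex1(3)] by auto
  also have "\<dots> \<longleftrightarrow> (\<exists>a\<in>univ A. sat S (rel pm w \<phi>) ((e \<circ> v')(x := e a)) V)"
    using Ue US by auto
  also have "\<dots> \<longleftrightarrow> (\<exists>a\<in>univ A. sat A \<phi> (v'(x := a)) V')"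
    by (intro bex_cong refl, simp only: upd, rule Ex1.IH) (use Ex1.prems in auto)
  finally show ?case by (simp only: sat.simps)
next
  case (All1 x \<phi>)
  have upd: "(e \<circ> v')(x := e a) = e \<circ> (v'(x := a))" for a by (rule ext) simp
  have "sat S (rel pm w (All1 x \<phi>)) (e \<circ> v') V \<longleftrightarrow>
        (\<forall>a\<in>univ S. a \<in> U \<longrightarrow> sat S (rel pm w \<phi>) ((e \<circ> v')(x := a)) V)"
    using pm[OF All1(3)] by auto
  also have "\<dots> \<longleftrightarrow> (\<forall>a\<in>univ A. sat S (rel pm w \<phi>) ((e \<circ> v')(x := e a)) V)"
    using Ue US by auto
  also have "\<dots> \<longleftrightarrow> (\<forall>a\<in>univ A. sat A \<phi> (v'(x := a)) V')"
    by (intro ball_cong refl, simp only: upd, rule All1.IH) (use All1.prems in auto)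
  finally show ?case by (simp only: sat.simps)
next
  case (ExS X \<phi>)
  have gX: "good (V(X:=P))" for P using gu ExS.prems(1,2) by simp
  have pmX: "sat S (All1 0 (Disj (Neg (Mem 0 X)) (pm 0))) v'' (V(X:=P)) \<longleftrightarrow> P \<inter> univ S \<subseteq> U" for v'' P
  proof -
    have "\<forall>a\<in>univ S. sat S (pm 0) (v''(0:=a)) (V(X:=P)) \<longleftrightarrow> a \<in> U"
    proof
      fix a assume "a \<in> univ S"
      then show "sat S (pm 0) (v''(0:=a)) (V(X:=P)) \<longleftrightarrow> a \<in> U"
        using pm[OF gX[of P], of "v''(0:=a)" 0] by simp
    qed
    then show ?thesis by (simp only: sat.simps fun_upd_same) blast
  qed
  have "sat S (rel pm w (ExS X \<phi>)) (e \<circ> v') V \<longleftrightarrow>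
        (\<exists>P. P \<subseteq> univ S \<and> (P \<inter> univ S \<subseteq> U \<and> sat S (rel pm w \<phi>) (e \<circ> v') (V(X := P))))"
    by (simp only: rel.simps sat.simps(4,5,6,9,10) pmX)
  also have "\<dots> \<longleftrightarrow> (\<exists>P. P \<subseteq> U \<and> sat S (rel pm w \<phi>) (e \<circ> v') (V(X := P)))"
    by (rule ex_cong1) (use US in blast)
  also have "\<dots> \<longleftrightarrow> (\<exists>P'. P' \<subseteq> univ A \<and> sat S (rel pm w \<phi>) (e \<circ> v') (V(X := e ` P')))"
  proof -
    have d: "P \<subseteq> U \<Longrightarrow> e -` P \<inter> univ A \<subseteq> univ A \<and> P = e ` (e -` P \<inter> univ A)" for P
      using Ue by blast
    have i: "P' \<subseteq> univ A \<Longrightarrow> e ` P' \<subseteq> U" for P' using Ue by blast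
    show ?thesis
    proof
      assume H: "\<exists>P. P \<subseteq> U \<and> sat S (rel pm w \<phi>) (e \<circ> v') (V(X := P))"
      show "\<exists>P'. P' \<subseteq> univ A \<and> sat S (rel pm w \<phi>) (e \<circ> v') (V(X := e ` P'))"
        proof -
          from H obtain P where P: "P \<subseteq> U" "sat S (rel pm w \<phi>) (e \<circ> v') (V(X := P))" by blast
          from d[OF P(1)] P(2) show ?thesis by (metis (no_types, lifting))
        qed
    next
      assume H: "\<exists>P'. P' \<subseteq> univ A \<and> sat S (rel pm w \<phi>) (e \<circ> v') (V(X := e ` P'))"
      show "\<exists>P. P \<subseteq> U \<and> sat S (rel pm w \<phi>) (e \<circ> v') (V(X := P))"
        using H i by blast
    qed
  qed
  also have "\<dots> \<longleftrightarrow> (\<exists>P'. P' \<subseteq> univ A \<and> sat A \<phi> v' (V'(X := P')))"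
  proof (intro ex_cong1 conj_cong refl)
    fix P' assume P': "P' \<subseteq> univ A"
    have inv: "\<forall>Y\<in>fvS \<phi>. (V(X := e ` P')) Y \<inter> U = e ` (V'(X := P')) Y"
    proof
      fix Y assume "Y \<in> fvS \<phi>"
      show "(V(X := e ` P')) Y \<inter> U = e ` (V'(X := P')) Y"
      proof (cases "Y = X")
        case True then show ?thesis using P' Ue by auto
      next
        case False then show ?thesis using ExS.prems(3) \<open>Y \<in> fvS \<phi>\<close> by simp
      qed
    qed
    show "sat S (rel pm w \<phi>) (e \<circ> v') (V(X := e ` P')) \<longleftrightarrow> sat A \<phi> v' (V'(X := P'))"
      by (rule ExS.IH[OF _ gX inv]) (use ExS.prems in auto)
  qed
  finally show ?case by (simp only: sat.simps)
next
  case (AllS X \<phi>)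
  have gX: "good (V(X:=P))" for P using gu AllS.prems(1,2) by simp
  have pmX: "sat S (All1 0 (Disj (Neg (Mem 0 X)) (pm 0))) v'' (V(X:=P)) \<longleftrightarrow> P \<inter> univ S \<subseteq> U" for v'' P
  proof -
    have "\<forall>a\<in>univ S. sat S (pm 0) (v''(0:=a)) (V(X:=P)) \<longleftrightarrow> a \<in> U"
    proof
      fix a assume "a \<in> univ S"
      then show "sat S (pm 0) (v''(0:=a)) (V(X:=P)) \<longleftrightarrow> a \<in> U"
        using pm[OF gX[of P], of "v''(0:=a)" 0] by simp
    qed
    then show ?thesis by (simp only: sat.simps fun_upd_same) blast
  qed
  have "sat S (rel pm w (AllS X \<phi>)) (e \<circ> v') V \<longleftrightarrow>
        (\<forall>P. P \<subseteq> univ S \<longrightarrow> (P \<inter> univ S \<subseteq> U \<longrightarrow> sat S (rel pm w \<phi>) (e \<circ> v') (V(X := P))))"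
    by (simp only: rel.simps sat.simps(4,5,6,9,10) pmX disj_not1)
  also have "\<dots> \<longleftrightarrow> (\<forall>P. P \<subseteq> U \<longrightarrow> sat S (rel pm w \<phi>) (e \<circ> v') (V(X := P)))"
    by (rule all_cong1) (use US in blast)
  also have "\<dots> \<longleftrightarrow> (\<forall>P'. P' \<subseteq> univ A \<longrightarrow> sat S (rel pm w \<phi>) (e \<circ> v') (V(X := e ` P')))"
  proof -
    have d: "P \<subseteq> U \<Longrightarrow> e -` P \<inter> univ A \<subseteq> univ A \<and> P = e ` (e -` P \<inter> univ A)" for P
      using Ue by blast
    have i: "P' \<subseteq> univ A \<Longrightarrow> e ` P' \<subseteq> U" for P' using Ue by blast
    show ?thesis
    proof
      assume H: "\<forall>P. P \<subseteq> U \<longrightarrow> sat S (rel pm w \<phi>) (e \<circ> v') (V(X := P))"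
      show "\<forall>P'. P' \<subseteq> univ A \<longrightarrow> sat S (rel pm w \<phi>) (e \<circ> v') (V(X := e ` P'))"
        using H i by blast
    next
      assume H: "\<forall>P'. P' \<subseteq> univ A \<longrightarrow> sat S (rel pm w \<phi>) (e \<circ> v') (V(X := e ` P'))"
      show "\<forall>P. P \<subseteq> U \<longrightarrow> sat S (rel pm w \<phi>) (e \<circ> v') (V(X := P))"
        proof (intro allI impI)
          fix P assume P: "P \<subseteq> U"
          from d[OF P] H show "sat S (rel pm w \<phi>) (e \<circ> v') (V(X := P))" by (metis (no_types, lifting))
        qed
    qed
  qed
  also have "\<dots> \<longleftrightarrow> (\<forall>P'. P' \<subseteq> univ A \<longrightarrow> sat A \<phi> v' (V'(X := P')))"
  proof (intro all_cong1 imp_cong refl)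
    fix P' assume P': "P' \<subseteq> univ A"
    have inv: "\<forall>Y\<in>fvS \<phi>. (V(X := e ` P')) Y \<inter> U = e ` (V'(X := P')) Y"
    proof
      fix Y assume "Y \<in> fvS \<phi>"
      show "(V(X := e ` P')) Y \<inter> U = e ` (V'(X := P')) Y"
      proof (cases "Y = X")
        case True then show ?thesis using P' Ue by auto
      next
        case False then show ?thesis using AllS.prems(3) \<open>Y \<in> fvS \<phi>\<close> by simp
      qed
    qed
    show "sat S (rel pm w \<phi>) (e \<circ> v') (V(X := e ` P')) \<longleftrightarrow> sat A \<phi> v' (V'(X := P'))"
      by (rule AllS.IH[OF _ gX inv]) (use AllS.prems in auto)
  qed
  finally show ?case by (simp only: sat.simps)
qed




fun sr :: "'a set \<Rightarrow> 'b set \<Rightarrow> 'a rel \<Rightarrow> 'b rel \<Rightarrow> ('a + 'b) \<Rightarrow> ('a + 'b) \<Rightarrow> bool" where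
  "sr A B r1 r2 (Inl a) (Inl b) = ((a,b) \<in> r1)"
| "sr A B r1 r2 (Inl a) (Inr b) = (a \<in> A \<and> b \<in> B)"
| "sr A B r1 r2 (Inr a) (Inl b) = False"
| "sr A B r1 r2 (Inr a) (Inr b) = ((a,b) \<in> r2)"

lemma lin_facts:
  assumes "linear_order_on U r"
  shows "r \<subseteq> U \<times> U" and "x \<in> U \<Longrightarrow> (x,x) \<in> r" and "(x,y)\<in>r \<Longrightarrow> (y,z)\<in>r \<Longrightarrow> (x,z)\<in>r"
    and "(x,y)\<in>r \<Longrightarrow> (y,x)\<in>r \<Longrightarrow> x = y"
    and "x\<in>U \<Longrightarrow> y\<in>U \<Longrightarrow> x \<noteq> y \<Longrightarrow> (x,y)\<in>r \<or> (y,x)\<in>r"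
proof -
  have p: "r \<subseteq> U \<times> U" "refl_on U r" "trans r" "antisym r" "total_on U r"
    using assms unfolding linear_order_on_def partial_order_on_def preorder_on_def by blast+
  show "r \<subseteq> U \<times> U" by (rule p(1))
  show "x \<in> U \<Longrightarrow> (x,x) \<in> r" using p(2) unfolding refl_on_def by blast
  show "(x,y)\<in>r \<Longrightarrow> (y,z)\<in>r \<Longrightarrow> (x,z)\<in>r" using p(3) unfolding trans_def by blast
  show "(x,y)\<in>r \<Longrightarrow> (y,x)\<in>r \<Longrightarrow> x = y" using p(4) unfolding antisym_def by blast
  show "x\<in>U \<Longrightarrow> y\<in>U \<Longrightarrow> x \<noteq> y \<Longrightarrow> (x,y)\<in>r \<or> (y,x)\<in>r" using p(5) unfolding total_on_def by blast
qed

lemma sum_lin: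
  assumes l1: "linear_order_on A r1" and l2: "linear_order_on B r2"
  shows "linear_order_on (Inl ` A \<union> Inr ` B) {(x,y). x \<in> Inl ` A \<union> Inr ` B \<and> y \<in> Inl ` A \<union> Inr ` B \<and> sr A B r1 r2 x y}"
    (is "linear_order_on ?U ?r")
proof -
  note f1 = lin_facts[OF l1] and f2 = lin_facts[OF l2]
  have "?r \<subseteq> ?U \<times> ?U" by blast
  moreover have "refl_on ?U ?r" unfolding refl_on_def
  proof (intro ballI)
    fix x assume "x \<in> ?U" then show "(x,x) \<in> ?r" using f1(2) f2(2) by auto
  qed
  moreover have "trans ?r" unfolding trans_def
  proof (intro allI impI)
    fix x y z assume "(x,y) \<in> ?r" "(y,z) \<in> ?r"
    then show "(x,z) \<in> ?r"
      using f1(3) f2(3) by (cases x; cases y; cases z) auto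
  qed
  moreover have "antisym ?r" unfolding antisym_def
  proof (intro allI impI)
    fix x y assume "(x,y) \<in> ?r" "(y,x) \<in> ?r"
    then show "x = y"
      using f1(4) f2(4) by (cases x; cases y) auto
  qed
  moreover have "total_on ?U ?r" unfolding total_on_def
  proof (intro ballI impI)
    fix x y assume "x \<in> ?U" "y \<in> ?U" "x \<noteq> y"
    then show "(x,y) \<in> ?r \<or> (y,x) \<in> ?r"
      using f1(5) f2(5) by (cases x; cases y) auto
  qed
  ultimately show ?thesis
    unfolding linear_order_on_def partial_order_on_def preorder_on_def by blast
qed

lemma lin_empty: "linear_order_on {} {}"
  by (simp add: linear_order_on_def partial_order_on_def preorder_on_def refl_on_def trans_def antisym_def total_on_def)

lemma get_order:
  assumes "defines_order \<phi> n C" "A \<in> C"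
  shows "\<exists>P. (\<forall>i<n. P i \<subseteq> univ A) \<and> linear_order_on (univ A)
             {(a, b). a \<in> univ A \<and> b \<in> univ A \<and> sat A \<phi> (\<lambda>i. if i = 0 then a else b) P}"
proof (cases "univ A = {}")
  case True then show ?thesis using lin_empty by (intro exI[of _ "\<lambda>_. {}"]) simp
next
  case False then show ?thesis using assms unfolding defines_order_def by blast
qed




lemma univ_dunion[simp]: "univ (dunion A B) = Inl ` univ A \<union> Inr ` univ B"
  and rels_dunion[simp]: "rels (dunion A B) R = map Inl ` rels A R \<union> map Inr ` rels B R"
  by (simp_all add: dunion_def)

lemma Inr_notin_Inl[simp]: "Inr b \<notin> Inl ` X" and Inl_notin_Inr[simp]: "Inl a \<notin> Inr ` Y"
  by auto

lemma map_Inl_Inr: "ys \<noteq> [] \<or> zs \<noteq> [] \<Longrightarrow> map Inl ys \<noteq> map Inr zs"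
  by (cases ys; cases zs) auto

lemma dunion_orderable:
  fixes C K :: "('a, 'r::finite) struc set"
  assumes d1: "defines_order \<phi>1 n1 C" and d2: "defines_order \<phi>2 n2 K"
  shows "MSO_orderable (dunion_class C K)"
proof -
  obtain h :: "'r \<Rightarrow> nat" where h: "bij_betw h UNIV {0..<card (UNIV::'r set)}"
    using ex_bij_betw_finite_nat[OF finite_UNIV] by blast
  have hinj: "inj h" using h by (simp add: bij_betw_imp_inj_on)
  have hlt: "h R < card (UNIV::'r set)" for R using bij_betwE[OF h] by auto
  define M where "M = allS \<phi>1 \<union> allS \<phi>2 \<union> {n1, n2}"
  have Mfin: "finite M" using finite_allS by (auto simp: M_def)
  define m where "m = Suc (Max M)"
  have mM: "x \<in> M \<Longrightarrow> x < m" for x using Max_ge[OF Mfin] by (force simp: m_def)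
  have m1: "allS \<phi>1 \<subseteq> {..<m}" "allS \<phi>2 \<subseteq> {..<m}" "n1 < m" "n2 < m" using mM by (auto simp: M_def)
  define wA where "wA = (\<lambda>R. m + 1 + 2 * h R)"
  define wB where "wB = (\<lambda>R. m + 2 + 2 * h R)"
  define N where "N = m + 3 + 2 * card (UNIV::'r set)"
  have wAinj: "wA R = wA R' \<longleftrightarrow> R = R'" for R R' using hinj by (auto simp: wA_def inj_eq)
  have wBinj: "wB R = wB R' \<longleftrightarrow> R = R'" for R R' using hinj by (auto simp: wB_def inj_eq)
  have wAB: "wA R \<noteq> wB R'" for R R' by (simp add: wA_def wB_def) presburger
  have wgt: "m < wA R" "m < wB R" for R by (auto simp: wA_def wB_def)
  have wlt: "wA R < N" "wB R < N" for R using hlt[of R] by (auto simp: wA_def wB_def N_def)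
  define pA where "pA = (\<lambda>x::nat. (Mem x m :: 'r mso))"
  define pB where "pB = (\<lambda>x::nat. (Neg (Mem x m) :: 'r mso))"
  define \<psi> where "\<psi> = Disj (Conj (Mem 0 m) (Conj (Mem 1 m) (rel pA wA \<phi>1)))
     (Disj (Conj (Mem 0 m) (Neg (Mem 1 m))) (Conj (Neg (Mem 0 m)) (Conj (Neg (Mem 1 m)) (rel pB wB \<phi>2))))"
  have f1: "fv1 \<phi>1 \<subseteq> {0,1}" "fvS \<phi>1 \<subseteq> {..<n1}" using d1 unfolding defines_order_def by blast+
  have f2: "fv1 \<phi>2 \<subseteq> {0,1}" "fvS \<phi>2 \<subseteq> {..<n2}" using d2 unfolding defines_order_def by blast+
  have "defines_order \<psi> N (dunion_class C K)"
    unfolding defines_order_def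
  proof (intro conjI ballI impI)
    have a: "fv1 (pA y) \<subseteq> {y}" "fv1 (pB y) \<subseteq> {y}" for y by (auto simp: pA_def pB_def)
    have r1: "fv1 (rel pA wA \<phi>1) \<subseteq> fv1 \<phi>1" "fv1 (rel pB wB \<phi>2) \<subseteq> fv1 \<phi>2"
      using fv1_rel[OF a(1)] fv1_rel[OF a(2)] by blast+
    have "fv1 \<psi> = {0,1} \<union> fv1 (rel pA wA \<phi>1) \<union> fv1 (rel pB wB \<phi>2)"
      by (auto simp: \<psi>_def)
    then show "fv1 \<psi> \<subseteq> {0,1}" using r1 f1(1) f2(1) by blast
    have b: "fvS (pA y) \<subseteq> {m}" "fvS (pB y) \<subseteq> {m}" for y by (auto simp: pA_def pB_def)
    have r2: "fvS (rel pA wA \<phi>1) \<subseteq> fvS \<phi>1 \<union> range wA \<union> {m}" "fvS (rel pB wB \<phi>2) \<subseteq> fvS \<phi>2 \<union> range wB \<union> {m}"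
      using fvS_rel[of pA "{m}" _ wA \<phi>1] fvS_rel[of pB "{m}" _ wB \<phi>2] b by blast+
    have e: "fvS \<psi> = {m} \<union> fvS (rel pA wA \<phi>1) \<union> fvS (rel pB wB \<phi>2)"
      by (auto simp: \<psi>_def)
    have mN: "{m} \<subseteq> {..<N}" by (simp add: N_def)
    have rA: "range wA \<subseteq> {..<N}" and rB: "range wB \<subseteq> {..<N}" using wlt by auto
    have fA: "fvS \<phi>1 \<subseteq> {..<N}" using f1(2) m1(3) unfolding N_def by auto
    have fB: "fvS \<phi>2 \<subseteq> {..<N}" using f2(2) m1(4) unfolding N_def by auto
    have s1: "fvS (rel pA wA \<phi>1) \<subseteq> {..<N}" using r2(1) fA rA mN by (meson Un_least subset_trans)
    have s2: "fvS (rel pB wB \<phi>2) \<subseteq> {..<N}" using r2(2) fB rB mN by (meson Un_least subset_trans)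
    show "fvS \<psi> \<subseteq> {..<N}" unfolding e using mN s1 s2 by (meson Un_least)
  next
    fix S assume "S \<in> dunion_class C K" and Sne: "univ S \<noteq> {}"
    then obtain A B where AB: "A \<in> C" "B \<in> K" "S = dunion A B" unfolding dunion_class_def by blast
    obtain P1 where P1: "\<forall>i<n1. P1 i \<subseteq> univ A" and lin1: "linear_order_on (univ A)
             {(a, b). a \<in> univ A \<and> b \<in> univ A \<and> sat A \<phi>1 (\<lambda>i. if i = 0 then a else b) P1}"
      using get_order[OF d1 AB(1)] by blast
    obtain P2 where P2: "\<forall>i<n2. P2 i \<subseteq> univ B" and lin2: "linear_order_on (univ B)
             {(a, b). a \<in> univ B \<and> b \<in> univ B \<and> sat B \<phi>2 (\<lambda>i. if i = 0 then a else b) P2}"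
      using get_order[OF d2 AB(2)] by blast
    have US: "univ S = Inl ` univ A \<union> Inr ` univ B" using AB(3) by simp
    have RS: "rels S R = map Inl ` rels A R \<union> map Inr ` rels B R" for R using AB(3) by simp
    define bitA where "bitA = (\<lambda>R. if [] \<in> rels A R then univ S else {})"
    define bitB where "bitB = (\<lambda>R. if [] \<in> rels B R then univ S else {})"
    define P where "P = (\<lambda>X. if X < m then Inl ` (if X < n1 then P1 X else {}) \<union> Inr ` (if X < n2 then P2 X else {})
       else if X = m then Inl ` univ A
       else if X \<in> range wA then bitA (inv wA X)
       else if X \<in> range wB then bitB (inv wB X) else {})"
    have injwA: "inj wA" and injwB: "inj wB" using wAinj wBinj by (auto intro: injI)
    have Pm: "P m = Inl ` univ A" by (simp add: P_def)
    have PwA: "P (wA R) = bitA R" for R using wgt[of R] injwA by (auto simp: P_def)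
    have PwB: "P (wB R) = bitB R" for R using wgt[of R] injwB wAB by (auto simp: P_def) (metis wAB)+
    have Plow: "X < m \<Longrightarrow> P X = Inl ` (if X < n1 then P1 X else {}) \<union> Inr ` (if X < n2 then P2 X else {})" for X
      by (simp add: P_def)
    have Psub: "\<forall>i<N. P i \<subseteq> univ S"
    proof (intro allI impI)
      fix i assume "i < N"
      have "P1 i \<subseteq> univ A" if "i < n1" using P1 that by blast
      moreover have "P2 i \<subseteq> univ B" if "i < n2" using P2 that by blast
      ultimately show "P i \<subseteq> univ S" unfolding P_def US bitA_def bitB_def by auto
    qed
    define goodA where "goodA = (\<lambda>V. V m = Inl ` univ A \<and> (\<forall>R. V (wA R) = bitA R))"
    have relA: "sat S (rel pA wA \<phi>1) (Inl \<circ> v') P \<longleftrightarrow> sat A \<phi>1 v' P1" if v': "\<forall>x. v' x \<in> univ A" for v'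
    proof (rule rel_sat[where good = goodA and Xs = "{..<m}" and U = "Inl ` univ A"])
      show "inj Inl" by simp
      show "Inl ` univ A = Inl ` univ A" ..
      show "Inl ` univ A \<subseteq> univ S" using US by auto
      show "sat S (pA x) v V \<longleftrightarrow> v x \<in> Inl ` univ A" if "goodA V" for x v V
        using that by (simp add: pA_def goodA_def)
      show "goodA (V(X:=Q))" if "goodA V" "X \<in> {..<m}" for V X Q
      proof -
        have "X < m" using that(2) by simp
        then have "X \<noteq> m" "\<forall>R. wA R \<noteq> X" using wgt(1) by (simp, metis less_asym)
        then show ?thesis using that(1) by (simp add: goodA_def)
      qed
      show "map Inl ys \<in> rels S R \<longleftrightarrow> ys \<in> rels A R" if "ys \<noteq> []" for R ys
        using that map_Inl_Inr[of ys] by (auto simp: RS inj_image_mem_iff inj_mapI)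
      show "(\<exists>a\<in>univ S. a \<in> V (wA R)) \<longleftrightarrow> [] \<in> rels A R" if "goodA V" for R V
        using that Sne by (auto simp: goodA_def bitA_def)
      show "allS \<phi>1 \<subseteq> {..<m}" by (rule m1)
      show "goodA P" by (simp add: goodA_def Pm PwA)
      show "\<forall>X\<in>fvS \<phi>1. P X \<inter> Inl ` univ A = Inl ` P1 X"
      proof
        fix X assume "X \<in> fvS \<phi>1"
        then have "X < n1" "X < m" using f1 m1 by auto
        then show "P X \<inter> Inl ` univ A = Inl ` P1 X" using P1 by (auto simp: Plow)
      qed
      show "\<forall>x. v' x \<in> univ A" by (rule v')
    qed
    define goodB where "goodB = (\<lambda>V. V m = Inl ` univ A \<and> (\<forall>R. V (wB R) = bitB R))"
    have relB: "sat S (rel pB wB \<phi>2) (Inr \<circ> v') P \<longleftrightarrow> sat B \<phi>2 v' P2" if v': "\<forall>x. v' x \<in> univ B" for v'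
    proof (rule rel_sat[where good = goodB and Xs = "{..<m}" and U = "Inr ` univ B"])
      show "inj Inr" by simp
      show "Inr ` univ B = Inr ` univ B" ..
      show "Inr ` univ B \<subseteq> univ S" using US by auto
      show "sat S (pB x) v V \<longleftrightarrow> v x \<in> Inr ` univ B" if "goodB V" "v x \<in> univ S" for x v V
        using that by (auto simp: pB_def goodB_def US)
      show "goodB (V(X:=Q))" if "goodB V" "X \<in> {..<m}" for V X Q
      proof -
        have "X < m" using that(2) by simp
        then have "X \<noteq> m" "\<forall>R. wB R \<noteq> X" using wgt(2) by (simp, metis less_asym)
        then show ?thesis using that(1) by (simp add: goodB_def)
      qed
      show "map Inr ys \<in> rels S R \<longleftrightarrow> ys \<in> rels B R" if "ys \<noteq> []" for R ys
      proof -
        have "\<forall>zs. map Inr ys \<noteq> map Inl zs" using map_Inl_Inr[of _ ys] that by metis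
        then show ?thesis by (auto simp: RS inj_image_mem_iff inj_mapI)
      qed
      show "(\<exists>a\<in>univ S. a \<in> V (wB R)) \<longleftrightarrow> [] \<in> rels B R" if "goodB V" for R V
        using that Sne by (auto simp: goodB_def bitB_def)
      show "allS \<phi>2 \<subseteq> {..<m}" by (rule m1)
      show "goodB P" by (simp add: goodB_def Pm PwB)
      show "\<forall>X\<in>fvS \<phi>2. P X \<inter> Inr ` univ B = Inr ` P2 X"
      proof
        fix X assume "X \<in> fvS \<phi>2"
        then have "X < n2" "X < m" using f2 m1 by auto
        then show "P X \<inter> Inr ` univ B = Inr ` P2 X" using P2 by (auto simp: Plow)
      qed
      show "\<forall>x. v' x \<in> univ B" by (rule v')
    qed
    let ?R1 = "{(a, b). a \<in> univ A \<and> b \<in> univ A \<and> sat A \<phi>1 (\<lambda>i. if i = 0 then a else b) P1}"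
    let ?R2 = "{(a, b). a \<in> univ B \<and> b \<in> univ B \<and> sat B \<phi>2 (\<lambda>i. if i = 0 then a else b) P2}"
    have key: "sat S \<psi> (\<lambda>i. if i = 0 then x else y) P \<longleftrightarrow> sr (univ A) (univ B) ?R1 ?R2 x y"
      if "x \<in> univ S" "y \<in> univ S" for x y
    proof -
      show ?thesis
      proof (cases x)
        case (Inl a)
        then have a: "a \<in> univ A" using that US by auto
        show ?thesis
        proof (cases y)
          case (Inl b)
          then have b: "b \<in> univ A" using that US by auto
          have e: "(\<lambda>i. if i = 0 then Inl a else Inl b) = Inl \<circ> (\<lambda>i. if i = 0 then a else b)"
            by (rule ext) simp
          have "sat S (rel pA wA \<phi>1) (\<lambda>i. if i = 0 then Inl a else Inl b) P \<longleftrightarrow>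
                sat A \<phi>1 (\<lambda>i. if i = 0 then a else b) P1"
            unfolding e by (rule relA) (use a b in auto)
          then show ?thesis unfolding \<open>x = Inl a\<close> \<open>y = Inl b\<close> using a b by (simp add: \<psi>_def Pm)
        next
          case (Inr b)
          then have b: "b \<in> univ B" using that US by auto
          show ?thesis unfolding \<open>x = Inl a\<close> \<open>y = Inr b\<close> using a b by (simp add: \<psi>_def Pm)
        qed
      next
        case (Inr a)
        then have a: "a \<in> univ B" using that US by auto
        show ?thesis
        proof (cases y)
          case (Inl b)
          then have b: "b \<in> univ A" using that US by auto
          show ?thesis unfolding \<open>x = Inr a\<close> \<open>y = Inl b\<close> using a b by (simp add: \<psi>_def Pm)
        next
          case (Inr b)
          then have b: "b \<in> univ B" using that US by auto
          have e: "(\<lambda>i. if i = 0 then Inr a else Inr b) = Inr \<circ> (\<lambda>i. if i = 0 then a else b)"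
            by (rule ext) simp
          have "sat S (rel pB wB \<phi>2) (\<lambda>i. if i = 0 then Inr a else Inr b) P \<longleftrightarrow>
                sat B \<phi>2 (\<lambda>i. if i = 0 then a else b) P2"
            unfolding e by (rule relB) (use a b in auto)
          then show ?thesis unfolding \<open>x = Inr a\<close> \<open>y = Inr b\<close> using a b by (simp add: \<psi>_def Pm)
        qed
      qed
    qed
    have eq: "{(x, y). x \<in> univ S \<and> y \<in> univ S \<and> sat S \<psi> (\<lambda>i. if i = 0 then x else y) P}
      = {(x,y). x \<in> Inl ` univ A \<union> Inr ` univ B \<and> y \<in> Inl ` univ A \<union> Inr ` univ B \<and> sr (univ A) (univ B) ?R1 ?R2 x y}"
      using key US by auto
    have "linear_order_on (univ S) {(x, y). x \<in> univ S \<and> y \<in> univ S \<and> sat S \<psi> (\<lambda>i. if i = 0 then x else y) P}"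
      unfolding eq by (subst US) (rule sum_lin[OF lin1 lin2])
    then show "\<exists>P. (\<forall>i<N. P i \<subseteq> univ S) \<and> linear_order_on (univ S)
      {(a, b). a \<in> univ S \<and> b \<in> univ S \<and> sat S \<psi> (\<lambda>i. if i = 0 then a else b) P}"
      using Psub by blast
  qed
  then show ?thesis unfolding MSO_orderable_def by blast
qed

theorem proposition3p5:
  fixes ar :: "'r::finite \<Rightarrow> nat"
    and C K :: "('a, 'r) struc set"
  assumes "C \<noteq> {}" and "K \<noteq> {}"
    and "\<forall>S \<in> C. is_struct ar S" and "\<forall>S \<in> K. is_struct ar S"
  shows "(MSO_orderable (C \<union> K) \<longleftrightarrow> MSO_orderable C \<and> MSO_orderable K)
       \<and> (MSO_orderable (dunion_class C K) \<longleftrightarrow> MSO_orderable C \<and> MSO_orderable K)"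
proof -
  have i1: "MSO_orderable C \<and> MSO_orderable K" if "MSO_orderable (C \<union> K)"
  proof -
  note that
  then obtain \<phi> n where "defines_order \<phi> n (C \<union> K)" unfolding MSO_orderable_def by blast
  then have "defines_order \<phi> n C" "defines_order \<phi> n K" using defines_order_mono by blast+
  then show "MSO_orderable C \<and> MSO_orderable K" unfolding MSO_orderable_def by blast
  qed
  have i2: "MSO_orderable (C \<union> K)" if "MSO_orderable C \<and> MSO_orderable K"
  proof -
  note that
  then obtain \<phi>1 n1 \<phi>2 n2 where "defines_order \<phi>1 n1 C" "defines_order \<phi>2 n2 K"
    unfolding MSO_orderable_def by blast
  then show "MSO_orderable (C \<union> K)" by (rule union_orderable)
  qed
  have i3: "MSO_orderable (dunion_class C K)" if "MSO_orderable C \<and> MSO_orderable K"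
  proof -
  note that
  then obtain \<phi>1 n1 \<phi>2 n2 where "defines_order \<phi>1 n1 C" "defines_order \<phi>2 n2 K"
    unfolding MSO_orderable_def by blast
  then show "MSO_orderable (dunion_class C K)" by (rule dunion_orderable)
  qed
  have i4: "MSO_orderable C \<and> MSO_orderable K" if "MSO_orderable (dunion_class C K)"
  proof -
  note that
  then obtain \<psi> n where dor: "defines_order \<psi> n (dunion_class C K)" unfolding MSO_orderable_def by blast
  obtain B0 where B0: "B0 \<in> K" using assms(2) by blast
  obtain A0 where A0: "A0 \<in> C" using assms(1) by blast
  have finB0: "finite (univ B0)" using assms(4) B0 unfolding is_struct_def by blast
  have finA0: "finite (univ A0)" using assms(3) A0 unfolding is_struct_def by blast
  have "MSO_orderable C"
  proof (rule part_orderable[OF dor, of Inl Inr B0])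
    show "inj Inl" "inj Inr" by simp_all
    show "Inl a \<noteq> Inr b" for a b by simp
    show "finite (univ B0)" by (rule finB0)
    fix A assume "A \<in> C"
    then have "dunion A B0 \<in> dunion_class C K" using B0 unfolding dunion_class_def by blast
    then show "\<exists>S\<in>dunion_class C K. univ S = Inl ` univ A \<union> Inr ` univ B0 \<and>
                   (\<forall>R. rels S R = map Inl ` rels A R \<union> map Inr ` rels B0 R)"
      by (intro bexI[of _ "dunion A B0"]) simp_all
  qed
  moreover have "MSO_orderable K"
  proof (rule part_orderable[OF dor, of Inr Inl A0])
    show "inj Inl" "inj Inr" by simp_all
    show "Inr a \<noteq> Inl b" for a b by simp
    show "finite (univ A0)" by (rule finA0)
    fix B assume "B \<in> K"
    then have "dunion A0 B \<in> dunion_class C K" using A0 unfolding dunion_class_def by blast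
    then show "\<exists>S\<in>dunion_class C K. univ S = Inr ` univ B \<union> Inl ` univ A0 \<and>
                   (\<forall>R. rels S R = map Inr ` rels B R \<union> map Inl ` rels A0 R)"
      by (intro bexI[of _ "dunion A0 B"]) (simp_all add: Un_commute)
  qed
  ultimately show "MSO_orderable C \<and> MSO_orderable K" by blast
  qed
  show ?thesis using i1 i2 i3 i4 by blast
qed


end
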